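(* For all $\lambda j$-terms $t$, $u_1,\dots,u_m$ ($m\ge1$), $v_1,\dots,v_n$ ($n\ge0$) and pairwise distinct variables $x_1,\dots,x_m$ such that no $x_i$ is free in any $u_j$: if $u_1,\dots,u_m$ are $\lambda j$-strongly normalizing and $t\{x_1/u_1\}\cdots\{x_m/u_m\}\,v_1\cdots v_n$ is $\lambda j$-strongly normalizing, then $t[x_1/u_1]\cdots[x_m/u_m]\,v_1\cdots v_n$ is $\lambda j$-strongly normalizing.
   Context: $\lambda j$-terms are generated by $t,u::= x\mid \lambda x.t\mid t\,u\mid t[x/u]$ ($x$ ranging over variables); $\lambda x.t$ and $t[x/u]$ bind $x$ in $t$ (not in $u$), and terms are considered modulo $\alpha$-conversion. $\mathrm{fv}(t)$ is the set of free variables, $t\{x/u\}$ is capture-avoiding meta-level substitution, and $|t|_x$ is the number of free occurrences of $x$ in $t$. Application associates to the left: $t\,v_1\cdots v_n=(\dots(t\,v_1)\dots)v_n$. If $|t|_x=n\ge2$, $t_{[y]_x}$ denotes any term obtained from $t$ by replacing $k$ of the free occurrences of $x$ by a fresh variable $y$, for some $1\le k\le n-1$. ${\tt L}$ denotes a (possibly empty) list of jumps $[x_1/u_1]\dots[x_k/u_k]$. The rewriting rules, closed under all contexts, are: $({\tt dB})$ $(\lambda x.t){\tt L}\,u\to t[x/u]{\tt L}$ where no $x_i$ of ${\tt L}$ is free in $u$; $({\tt w})$ $t[x/u]\to t$ if $|t|_x=0$; $({\tt d})$ $t[x/u]\to t\{x/u\}$ if $|t|_x=1$; $({\tt c})$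 $t[x/u]\to t_{[y]_x}[x/u][y/u]$ if $|t|_x\ge2$, $y$ fresh. $\to_{\lambda j}$ is the union of all four. A term is $\lambda j$-strongly normalizing if it has no infinite $\to_{\lambda j}$-reduction sequence. *)

theory Defs
  imports Main
begin

(* lambda-j terms modulo alpha-conversion, in de Bruijn representation.
   Var i   : variable with de Bruijn index i
   Lam t   : \<lambda>x.t          (binds index 0 in t)
   App t u : t u
   Sub t u : t[x/u]        (binds index 0 in t, not in u) *)
datatype trm = Var nat | Lam trm | App trm trm | Sub trm trm

fun lift :: "nat \<Rightarrow> nat \<Rightarrow> trm \<Rightarrow> trm" where
  "lift k c (Var i) = (if i < c then Var i else Var (i + k))"
| "lift k c (Lam t) = Lam (lift k (Suc c) t)"
| "lift k c (App t u) = App (lift k c t) (lift k c u)"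
| "lift k c (Sub t u) = Sub (lift k (Suc c) t) (lift k c u)"

fun subst :: "trm \<Rightarrow> nat \<Rightarrow> trm \<Rightarrow> trm" where
  "subst (Var i) k s = (if k < i then Var (i - 1) else if i = k then s else Var i)"
| "subst (Lam t) k s = Lam (subst t (Suc k) (lift 1 0 s))"
| "subst (App t u) k s = App (subst t k s) (subst u k s)"
| "subst (Sub t u) k s = Sub (subst t (Suc k) (lift 1 0 s)) (subst u k s)"

fun occ :: "nat \<Rightarrow> trm \<Rightarrow> nat" where
  "occ k (Var i) = (if i = k then 1 else 0)"
| "occ k (Lam t) = occ (Suc k) t"
| "occ k (App t u) = occ k t + occ k u"
| "occ k (Sub t u) = occ (Suc k) t + occ k u"

(* split d t t' : t' arises from t by inserting a new variable y at index d+1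
   (the variable x being index d) and renaming some of the free occurrences of x to y *)
inductive split :: "nat \<Rightarrow> trm \<Rightarrow> trm \<Rightarrow> bool" where
  split_lt: "i < d \<Longrightarrow> split d (Var i) (Var i)"
| split_keep: "split d (Var d) (Var d)"
| split_ren: "split d (Var d) (Var (Suc d))"
| split_gt: "d < i \<Longrightarrow> split d (Var i) (Var (Suc i))"
| split_Lam: "split (Suc d) t t' \<Longrightarrow> split d (Lam t) (Lam t')"
| split_App: "split d t t' \<Longrightarrow> split d u u' \<Longrightarrow> split d (App t u) (App t' u')"
| split_Sub: "split (Suc d) t t' \<Longrightarrow> split d u u' \<Longrightarrow> split d (Sub t u) (Sub t' u')"

(* the lambda-j reduction relation, closed under all contexts.
   foldl Sub s L  is  s L  for a list of jumps L = [x1/u1]...[xk/uk] *)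
inductive step :: "trm \<Rightarrow> trm \<Rightarrow> bool" where
  dB: "step (App (foldl Sub (Lam t) L) u) (foldl Sub (Sub t (lift (length L) 0 u)) L)"
| w: "occ 0 t = 0 \<Longrightarrow> step (Sub t u) (subst t 0 u)"
| d: "occ 0 t = 1 \<Longrightarrow> step (Sub t u) (subst t 0 u)"
| c: "2 \<le> occ 0 t \<Longrightarrow> split 0 t t' \<Longrightarrow> 1 \<le> occ 0 t' \<Longrightarrow> 1 \<le> occ 1 t' \<Longrightarrow>
      step (Sub t u) (Sub (Sub t' (lift 1 0 u)) u)"
| lam: "step t t' \<Longrightarrow> step (Lam t) (Lam t')"
| appL: "step t t' \<Longrightarrow> step (App t u) (App t' u)"
| appR: "step u u' \<Longrightarrow> step (App t u) (App t u')"
| subL: "step t t' \<Longrightarrow> step (Sub t u) (Sub t' u)"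
| subR: "step u u' \<Longrightarrow> step (Sub t u) (Sub t u')"

definition SN :: "trm \<Rightarrow> bool" where
  "SN t \<longleftrightarrow> \<not> (\<exists>f. f 0 = t \<and> (\<forall>i. step (f i) (f (Suc i))))"

(* t[x1/u1]...[xm/um] where t lives under the m binders x1 (index 0) ... xm (index m-1)
   and the u_j are given in the outer context (no x_i free in u_j): u_j is lifted over
   the binders x_{j+1},...,x_m that scope over it *)
fun jumps :: "trm \<Rightarrow> trm list \<Rightarrow> trm" where
  "jumps t [] = t"
| "jumps t (u # us) = jumps (Sub t (lift (length us) 0 u)) us"

(* t{x1/u1}...{xm/um}, same conventions *)
fun msubsts :: "trm \<Rightarrow> trm list \<Rightarrow> trm" where
  "msubsts t [] = t"
| "msubsts t (u # us) = msubsts (subst t 0 (lift (length us) 0 u)) us"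

end

theory Submission
  imports Defs "HOL-Library.Multiset"
begin

fun upr :: "(nat \<Rightarrow> nat) \<Rightarrow> nat \<Rightarrow> nat" where
  "upr f 0 = 0" | "upr f (Suc i) = Suc (f i)"

primrec ren :: "(nat \<Rightarrow> nat) \<Rightarrow> trm \<Rightarrow> trm" where
  "ren f (Var i) = Var (f i)"
| "ren f (Lam t) = Lam (ren (upr f) t)"
| "ren f (App t u) = App (ren f t) (ren f u)"
| "ren f (Sub t u) = Sub (ren (upr f) t) (ren f u)"

fun ups :: "(nat \<Rightarrow> trm) \<Rightarrow> nat \<Rightarrow> trm" where
  "ups s 0 = Var 0" | "ups s (Suc i) = ren Suc (s i)"

primrec psubst :: "(nat \<Rightarrow> trm) \<Rightarrow> trm \<Rightarrow> trm" where
  "psubst s (Var i) = s i"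
| "psubst s (Lam t) = Lam (psubst (ups s) t)"
| "psubst s (App t u) = App (psubst s t) (psubst s u)"
| "psubst s (Sub t u) = Sub (psubst (ups s) t) (psubst s u)"

primrec upsn :: "nat \<Rightarrow> (nat \<Rightarrow> trm) \<Rightarrow> nat \<Rightarrow> trm" where
  "upsn 0 s = s" | "upsn (Suc n) s = ups (upsn n s)"

lemma upr_comp: "upr f \<circ> upr g = upr (f \<circ> g)"
  by (rule ext, case_tac x) auto

lemma ren_ren: "ren f (ren g t) = ren (f \<circ> g) t"
  by (induction t arbitrary: f g) (auto simp: upr_comp)

lemma upr_id: "upr id = id"
  by (rule ext, case_tac x) auto

lemma upr_id': "upr (\<lambda>i. i) = (\<lambda>i. i)"
proof
  fix x :: nat show "upr (\<lambda>i. i) x = x" by (cases x) auto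
qed

lemma ren_id': "ren (\<lambda>i. i) t = t"
  by (induction t) (auto simp: upr_id')

lemma ups_upr: "ups s \<circ> upr f = ups (s \<circ> f)"
  by (rule ext, case_tac x) auto

lemma psubst_ren: "psubst s (ren f t) = psubst (s \<circ> f) t"
  by (induction t arbitrary: s f) (auto simp: ups_upr)

lemma ren_ups: "ren (upr f) \<circ> ups s = ups (ren f \<circ> s)"
  by (rule ext, case_tac x) (auto simp: ren_ren comp_def)

lemma ren_psubst: "ren f (psubst s t) = psubst (ren f \<circ> s) t"
  by (induction t arbitrary: s f) (auto simp: ren_ups)

lemma ups_comp: "psubst (ups s) \<circ> ups r = ups (psubst s \<circ> r)"
  by (rule ext, case_tac x) (auto simp: psubst_ren ren_psubst comp_def)

lemma psubst_psubst: "psubst s (psubst r t) = psubst (psubst s \<circ> r) t"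
  by (induction t arbitrary: s r) (auto simp: ups_comp)

lemma ups_Var: "ups Var = Var"
  by (rule ext, case_tac x) auto

lemma psubst_Var: "psubst Var t = t"
  by (induction t) (auto simp: ups_Var)

lemma ups_ren: "ups (Var \<circ> f) = Var \<circ> upr f"
  by (rule ext, case_tac x) auto

lemma ren_psubst_Var: "ren f t = psubst (Var \<circ> f) t"
  by (induction t arbitrary: f) (auto simp: ups_ren)

definition liftf :: "nat \<Rightarrow> nat \<Rightarrow> nat \<Rightarrow> nat" where
  "liftf k c i = (if i < c then i else i + k)"

lemma upr_liftf: "upr (liftf k c) = liftf k (Suc c)"
  by (rule ext, case_tac x) (auto simp: liftf_def)

lemma lift_ren: "lift k c t = ren (liftf k c) t"
  by (induction t arbitrary: c) (auto simp: upr_liftf liftf_def)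

lemma lift0: "lift k 0 t = ren (\<lambda>i. i + k) t"
proof -
  have "liftf k 0 = (\<lambda>i. i + k)" by (rule ext) (simp add: liftf_def)
  thus ?thesis by (simp add: lift_ren)
qed

definition substf :: "nat \<Rightarrow> trm \<Rightarrow> nat \<Rightarrow> trm" where
  "substf k s i = (if k < i then Var (i - 1) else if i = k then s else Var i)"

lemma ups_substf: "ups (substf k s) = substf (Suc k) (lift 1 0 s)"
  by (rule ext, case_tac x) (auto simp: substf_def lift0)

lemma subst_psubst: "subst t k s = psubst (substf k s) t"
  by (induction t arbitrary: k s) (auto simp: ups_substf substf_def)

lemma upsn_lt: "i < n \<Longrightarrow> upsn n s i = Var i"
  by (induction n arbitrary: i) (auto, case_tac i, auto)

lemma upsn_add: "upsn n s (i + n) = ren (\<lambda>j. j + n) (s i)"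
  by (induction n arbitrary: i) (auto simp: ren_ren comp_def ren_id')

lemma upsn_ge: "n \<le> i \<Longrightarrow> upsn n s i = ren (\<lambda>j. j + n) (s (i - n))"
  using upsn_add[of n s "i - n"] by simp

lemma psubst_lift: "psubst (upsn n s) (lift n 0 u) = lift n 0 (psubst s u)"
  by (simp add: lift0 psubst_ren ren_psubst comp_def upsn_add)

lemma lift_lift0: "lift a 0 (lift b 0 u) = lift (a + b) 0 u"
proof -
  have "(\<lambda>x. x + b + a) = (\<lambda>i. i + (a + b))" by (rule ext) simp
  thus ?thesis by (simp add: lift0 ren_ren comp_def)
qed

lemma upr_pre: "(\<forall>i. (f i = k) = (i = k0)) \<Longrightarrow> (\<forall>i. (upr f i = Suc k) = (i = Suc k0))"
  by (intro allI, case_tac i) auto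

lemma occ_ren_inj: "(\<forall>i. (f i = k) = (i = k0)) \<Longrightarrow> occ k (ren f t) = occ k0 t"
proof (induction t arbitrary: f k k0)
  case (Lam t) thus ?case using upr_pre[OF Lam.prems] by simp
next
  case (App t u) show ?case by (simp add: App.IH(1)[OF App.prems] App.IH(2)[OF App.prems])
next
  case (Sub t u) thus ?case using Sub.IH(1)[OF upr_pre[OF Sub.prems]] Sub.IH(2)[OF Sub.prems] by simp
qed auto

lemma upr_none: "(\<forall>i. f i \<noteq> k) \<Longrightarrow> (\<forall>i. upr f i \<noteq> Suc k)"
  by (intro allI, case_tac i) auto

lemma occ_ren_none: "(\<forall>i. f i \<noteq> k) \<Longrightarrow> occ k (ren f t) = 0"
proof (induction t arbitrary: f k)
  case (Lam t) thus ?case using upr_none[OF Lam.prems] by simp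
next
  case (Sub t u) thus ?case using Sub.IH(1)[OF upr_none[OF Sub.prems]] Sub.IH(2)[OF Sub.prems] by simp
qed auto

lemma occ_Suc_ren: "occ (Suc j) (ren Suc t) = occ j t"
  by (rule occ_ren_inj) auto

lemma occ_0_ren: "occ 0 (ren Suc t) = 0"
  by (rule occ_ren_none) auto

lemma ups_occ: "(\<forall>i. occ j (s i) = (if i = j0 then 1 else 0)) \<Longrightarrow>
   (\<forall>i. occ (Suc j) (ups s i) = (if i = Suc j0 then 1 else 0))"
  by (intro allI, case_tac i) (auto simp: occ_Suc_ren)

lemma occ_psubst: "(\<forall>i. occ j (s i) = (if i = j0 then 1 else 0)) \<Longrightarrow> occ j (psubst s t) = occ j0 t"
proof (induction t arbitrary: s j j0)
  case (Lam t) thus ?case using ups_occ[OF Lam.prems] by simp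
next
  case (App t u) show ?case by (simp add: App.IH(1)[OF App.prems] App.IH(2)[OF App.prems])
next
  case (Sub t u) thus ?case using Sub.IH(1)[OF ups_occ[OF Sub.prems]] Sub.IH(2)[OF Sub.prems] by simp
qed auto

lemma ups_occ0: "(\<forall>i. occ j (s i) = 0) \<Longrightarrow> (\<forall>i. occ (Suc j) (ups s i) = 0)"
  by (intro allI, case_tac i) (auto simp: occ_Suc_ren)

lemma occ_psubst_none: "(\<forall>i. occ j (s i) = 0) \<Longrightarrow> occ j (psubst s t) = 0"
proof (induction t arbitrary: s j)
  case (Lam t) thus ?case using ups_occ0[OF Lam.prems] by simp
next
  case (Sub t u) thus ?case using Sub.IH(1)[OF ups_occ0[OF Sub.prems]] Sub.IH(2)[OF Sub.prems] by simp
qed auto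

lemma occ_ups_pos: "0 < occ (Suc i) (ups s j) \<Longrightarrow> \<exists>j'. j = Suc j' \<and> 0 < occ i (s j')"
  by (cases j) (auto simp: occ_Suc_ren)

lemma occ_psubst_pos: "0 < occ i (psubst s t) \<Longrightarrow> \<exists>j. 0 < occ j t \<and> 0 < occ i (s j)"
proof (induction t arbitrary: s i)
  case (Var x) thus ?case by auto
next
  case (Lam t)
  have "0 < occ (Suc i) (psubst (ups s) t)" using Lam.prems by simp
  then obtain j where j: "0 < occ j t" "0 < occ (Suc i) (ups s j)" using Lam.IH by blast
  then obtain j' where "j = Suc j'" "0 < occ i (s j')" using occ_ups_pos by blast
  thus ?case using j by (rule_tac x=j' in exI) simp
next
  case (App t u)
  show ?case
  proof (cases "0 < occ i (psubst s t)")
    case True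
    then obtain j where "0 < occ j t" "0 < occ i (s j)" using App.IH(1) by blast
    thus ?thesis by (rule_tac x=j in exI) simp
  next
    case False
    hence "0 < occ i (psubst s u)" using App.prems by simp
    then obtain j where "0 < occ j u" "0 < occ i (s j)" using App.IH(2) by blast
    thus ?thesis by (rule_tac x=j in exI) simp
  qed
next
  case (Sub t u)
  show ?case
  proof (cases "0 < occ (Suc i) (psubst (ups s) t)")
    case True
    then obtain j where j: "0 < occ j t" "0 < occ (Suc i) (ups s j)" using Sub.IH(1) by blast
    then obtain j' where "j = Suc j'" "0 < occ i (s j')" using occ_ups_pos by blast
    thus ?thesis using j by (rule_tac x=j' in exI) simp
  next
    case False
    hence "0 < occ i (psubst s u)" using Sub.prems by simp
    then obtain j where "0 < occ j u" "0 < occ i (s j)" using Sub.IH(2) by blast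
    thus ?thesis by (rule_tac x=j in exI) simp
  qed
qed

fun psL :: "(nat \<Rightarrow> trm) \<Rightarrow> trm list \<Rightarrow> trm list" where
  "psL s [] = []"
| "psL s (l # L) = psubst (upsn (length L) s) l # psL s L"

lemma length_psL[simp]: "length (psL s L) = length L"
  by (induction L) auto

lemma psubst_foldl: "psubst s (foldl Sub a L) = foldl Sub (psubst (upsn (length L) s) a) (psL s L)"
  by (induction L arbitrary: a) auto

fun occL :: "nat \<Rightarrow> trm list \<Rightarrow> nat" where
  "occL i [] = 0"
| "occL i (l # L) = occ (i + length L) l + occL i L"

lemma occ_foldl: "occ i (foldl Sub a L) = occ (i + length L) a + occL i L"
  by (induction L arbitrary: a) auto

lemma upr_if: "upr (\<lambda>i. if f i < d then f i else Suc (f i)) = (\<lambda>i. if upr f i < Suc d then upr f i else Suc (upr f i))"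
proof
  fix x show "upr (\<lambda>i. if f i < d then f i else Suc (f i)) x = (if upr f x < Suc d then upr f x else Suc (upr f x))"
    by (cases x) auto
qed

lemma split_ren: "(\<forall>i. f i \<noteq> d) \<Longrightarrow> split d (ren f s) (ren (\<lambda>i. if f i < d then f i else Suc (f i)) s)"
proof (induction s arbitrary: f d)
  case (Var x)
  show ?case
  proof (cases "f x < d")
    case True thus ?thesis by (simp add: split_lt)
  next
    case False
    with Var.prems have "d < f x" by (metis linorder_neqE_nat)
    thus ?thesis by (simp add: split_gt)
  qed
next
  case (Lam t)
  have "\<forall>i. upr f i \<noteq> Suc d" using Lam.prems by (intro allI, case_tac i) auto
  from Lam.IH[OF this] show ?case by (simp add: upr_if split_Lam)
next
  case (App t u) thus ?case by (simp add: split_App)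
next
  case (Sub t u)
  have "\<forall>i. upr f i \<noteq> Suc d" using Sub.prems by (intro allI, case_tac i) auto
  from Sub.IH(1)[OF this] Sub.IH(2)[OF Sub.prems] show ?case by (simp add: upr_if split_Sub)
qed

lemma split_psubst: "split d t t' \<Longrightarrow> split d (psubst (upsn (Suc d) s) t) (psubst (upsn (Suc (Suc d)) s) t')"
proof (induction rule: split.induct)
  case (split_lt i d)
  have "upsn (Suc d) s i = Var i" "upsn (Suc (Suc d)) s i = Var i" using split_lt by (simp_all add: upsn_lt del: upsn.simps)
  thus ?case using split_lt by (simp only: psubst.simps split.split_lt)
next
  case (split_keep d)
  have "upsn (Suc d) s d = Var d" "upsn (Suc (Suc d)) s d = Var d" by (simp_all add: upsn_lt del: upsn.simps)
  thus ?case by (simp only: psubst.simps split.split_keep)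
next
  case (split_ren d)
  have "upsn (Suc d) s d = Var d" "upsn (Suc (Suc d)) s (Suc d) = Var (Suc d)" by (simp_all add: upsn_lt del: upsn.simps)
  thus ?case by (simp only: psubst.simps split.split_ren)
next
  case (split_gt d i)
  have a: "upsn (Suc d) s i = ren (\<lambda>j. j + Suc d) (s (i - Suc d))" using split_gt by (simp add: upsn_ge del: upsn.simps)
  have b: "upsn (Suc (Suc d)) s (Suc i) = ren (\<lambda>j. j + Suc (Suc d)) (s (i - Suc d))" using split_gt by (simp add: upsn_ge del: upsn.simps)
  have e: "(\<lambda>j. if j + Suc d < d then j + Suc d else Suc (j + Suc d)) = (\<lambda>j. j + Suc (Suc d))" by (rule ext) simp
  have "split d (ren (\<lambda>j. j + Suc d) (s (i - Suc d))) (ren (\<lambda>j. if j + Suc d < d then j + Suc d else Suc (j + Suc d)) (s (i - Suc d)))"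
    by (rule split_ren) simp
  thus ?case by (simp only: a b e psubst.simps)
next
  case (split_Lam d t t') thus ?case by (simp only: psubst.simps upsn.simps split.split_Lam)
next
  case (split_App d t t' u u') thus ?case by (simp only: psubst.simps split.split_App)
next
  case (split_Sub d t t' u u') thus ?case by (simp only: psubst.simps upsn.simps split.split_Sub)
qed

lemma split_occ_gt: "split d t t' \<Longrightarrow> d < j \<Longrightarrow> occ (Suc j) t' = occ j t"
  by (induction arbitrary: j rule: split.induct) auto

lemma split_occ_lt: "split d t t' \<Longrightarrow> j < d \<Longrightarrow> occ j t' = occ j t"
  by (induction arbitrary: j rule: split.induct) auto

lemma split_occ_eq: "split d t t' \<Longrightarrow> occ d t' + occ (Suc d) t' = occ d t"
  by (induction rule: split.induct) auto

lemma split_no_occ: "split d s s' \<Longrightarrow> occ d s = 0 \<Longrightarrow> s' = lift 1 d s"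
  by (induction rule: split.induct) auto

lemma ups_agree: "(\<forall>i<d. s' i = s i) \<Longrightarrow> s' d = s d \<Longrightarrow> s' (Suc d) = s d \<Longrightarrow> (\<forall>i>d. s' (Suc i) = s i) \<Longrightarrow>
  (\<forall>i<Suc d. ups s' i = ups s i) \<and> ups s' (Suc d) = ups s (Suc d) \<and> ups s' (Suc (Suc d)) = ups s (Suc d) \<and> (\<forall>i>Suc d. ups s' (Suc i) = ups s i)"
  apply (intro conjI allI impI)
  apply (case_tac i; simp)
  apply simp
  apply simp
  apply (case_tac i; simp)
  done

lemma split_psubst_eq: "split d t t' \<Longrightarrow> (\<forall>i<d. s' i = s i) \<Longrightarrow> s' d = s d \<Longrightarrow> s' (Suc d) = s d \<Longrightarrow>
   (\<forall>i>d. s' (Suc i) = s i) \<Longrightarrow> psubst s' t' = psubst s t"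
proof (induction arbitrary: s s' rule: split.induct)
  case (split_Lam d t t')
  thus ?case using ups_agree[OF split_Lam.prems] by simp
next
  case (split_Sub d t t' u u')
  thus ?case using ups_agree[OF split_Sub.prems] by simp
qed auto

lemma substf0_Suc: "substf 0 v \<circ> Suc = Var"
  by (rule ext) (simp add: substf_def)

lemma psubst_subst0: "psubst s (subst t 0 u) = subst (psubst (ups s) t) 0 (psubst s u)"
proof -
  have "psubst s \<circ> substf 0 u = psubst (substf 0 (psubst s u)) \<circ> ups s"
  proof
    fix x show "(psubst s \<circ> substf 0 u) x = (psubst (substf 0 (psubst s u)) \<circ> ups s) x"
      by (cases x) (simp_all add: substf_def psubst_ren substf0_Suc psubst_Var)
  qed
  thus ?thesis by (simp add: subst_psubst psubst_psubst)
qed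

lemma occ0_ups: "occ 0 (psubst (ups s) t) = occ 0 t"
proof (rule occ_psubst, rule allI)
  fix i show "occ 0 (ups s i) = (if i = 0 then 1 else 0)" by (cases i) (simp_all add: occ_0_ren)
qed

lemma occ1_ups2: "occ 1 (psubst (ups (ups s)) t) = occ 1 t"
proof (rule occ_psubst, rule allI)
  fix i show "occ 1 (ups (ups s) i) = (if i = 1 then 1 else 0)"
  proof (cases i)
    case (Suc j) thus ?thesis by (cases j) (simp_all add: occ_0_ren occ_Suc_ren[of 0, simplified])
  qed simp
qed

lemma step_psubst: "step t t' \<Longrightarrow> step (psubst s t) (psubst s t')"
proof (induction arbitrary: s rule: step.induct)
  case (dB t L u)
  have "step (App (foldl Sub (Lam (psubst (ups (upsn (length L) s)) t)) (psL s L)) (psubst s u))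
     (foldl Sub (Sub (psubst (ups (upsn (length L) s)) t) (lift (length (psL s L)) 0 (psubst s u))) (psL s L))"
    by (rule step.dB)
  thus ?case by (simp add: psubst_foldl psubst_lift del: upsn.simps)
next
  case (w t u)
  thus ?case by (simp add: psubst_subst0 occ0_ups step.w)
next
  case (d t u)
  thus ?case by (simp add: psubst_subst0 occ0_ups step.d)
next
  case (c t t' u)
  have sp: "split 0 (psubst (ups s) t) (psubst (ups (ups s)) t')"
    using split_psubst[OF c(2), of s] by simp
  have "step (Sub (psubst (ups s) t) (psubst s u)) (Sub (Sub (psubst (ups (ups s)) t') (lift 1 0 (psubst s u))) (psubst s u))"
    by (rule step.c) (use c sp in \<open>simp_all add: occ0_ups occ1_ups2[simplified]\<close>)
  moreover have "psubst (ups s) (lift 1 0 u) = lift 1 0 (psubst s u)"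
    using psubst_lift[of 1 s u] by simp
  ultimately show ?case by simp
qed (auto intro: step.intros)

lemma step_ren: "step t t' \<Longrightarrow> step (ren f t) (ren f t')"
  by (simp add: ren_psubst_Var step_psubst)

lemma step_lift: "step t t' \<Longrightarrow> step (lift n c t) (lift n c t')"
  by (simp add: lift_ren step_ren)

lemma occ_lift0: "occ (i + n) (lift n 0 u) = occ i u"
  by (simp add: lift0, rule occ_ren_inj) auto

lemma occ_lift0_lt: "i < n \<Longrightarrow> occ i (lift n 0 u) = 0"
  by (simp add: lift0, rule occ_ren_none) auto

lemma occ_step: "step t t' \<Longrightarrow> 0 < occ i t' \<Longrightarrow> 0 < occ i t"
proof (induction arbitrary: i rule: step.induct)
  case (dB t L u)
  thus ?case using occ_lift0[of i "length L" u] by (auto simp: occ_foldl)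
next
  case (w t u)
  obtain j where j: "0 < occ j t" "0 < occ i (substf 0 u j)"
    using occ_psubst_pos w(2) by (metis subst_psubst)
  thus ?case by (cases j) (auto simp: substf_def split: if_splits)
next
  case (d t u)
  obtain j where j: "0 < occ j t" "0 < occ i (substf 0 u j)"
    using occ_psubst_pos d(2) by (metis subst_psubst)
  thus ?case by (cases j) (auto simp: substf_def split: if_splits)
next
  case (c t t' u)
  have "occ (Suc (Suc i)) t' = occ (Suc i) t" using split_occ_gt[OF c(2), of "Suc i"] by simp
  moreover have "occ (Suc i) (lift 1 0 u) = occ i u" using occ_lift0[of i 1 u] by simp
  ultimately show ?case using c(5) by simp
next
  case (subR u u' t) thus ?case by (cases "0 < occ (Suc i) t") auto
next
  case (appR u u' t) thus ?case by (cases "0 < occ i t") auto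
qed auto

lemma ren_cong_occ: "(\<forall>i. 0 < occ i t \<longrightarrow> f i = g i) \<Longrightarrow> ren f t = ren g t"
proof (induction t arbitrary: f g)
  case (Lam t)
  have "\<forall>i. 0 < occ i t \<longrightarrow> upr f i = upr g i"
  proof (intro allI impI)
    fix i assume "0 < occ i t" thus "upr f i = upr g i" using Lam.prems by (cases i) auto
  qed
  thus ?case using Lam.IH[of "upr f" "upr g"] by simp
next
  case (Sub t u)
  have "\<forall>i. 0 < occ i t \<longrightarrow> upr f i = upr g i"
  proof (intro allI impI)
    fix i assume "0 < occ i t" thus "upr f i = upr g i" using Sub.prems by (cases i) auto
  qed
  moreover have "\<forall>i. 0 < occ i u \<longrightarrow> f i = g i" using Sub.prems by simp
  ultimately show ?case using Sub.IH(1)[of "upr f" "upr g"] Sub.IH(2)[of f g] by simp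
next
  case (App t u)
  have "\<forall>i. 0 < occ i t \<longrightarrow> f i = g i" "\<forall>i. 0 < occ i u \<longrightarrow> f i = g i" using App.prems by simp_all
  thus ?case using App.IH(1)[of f g] App.IH(2)[of f g] by simp
qed simp

lemma step_lift_inv: "step (lift n 0 u) w \<Longrightarrow> \<exists>u'. w = lift n 0 u' \<and> step u u'"
proof -
  assume st: "step (lift n 0 u) w"
  let ?g = "\<lambda>i. i - n"
  have "step (ren ?g (lift n 0 u)) (ren ?g w)" using step_ren[OF st] .
  moreover have "ren ?g (lift n 0 u) = u" by (simp add: lift0 ren_ren comp_def ren_id')
  moreover have "ren (\<lambda>i. i + n) (ren ?g w) = w"
  proof -
    have "ren (\<lambda>i. i - n + n) w = ren (\<lambda>i. i) w"
    proof (rule ren_cong_occ, intro allI impI)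
      fix i assume "0 < occ i w"
      hence "0 < occ i (lift n 0 u)" using occ_step[OF st] by blast
      hence "n \<le> i" using occ_lift0_lt[of i n u] by (cases "i < n") auto
      thus "i - n + n = i" by simp
    qed
    thus ?thesis by (simp add: ren_ren comp_def ren_id')
  qed
  ultimately show ?thesis by (metis lift0)
qed

inductive SNa :: "trm \<Rightarrow> bool" where
  SNaI: "(\<And>t'. step t t' \<Longrightarrow> SNa t') \<Longrightarrow> SNa t"

lemma SNa_SN: "SNa t \<Longrightarrow> SN t"
proof (induction rule: SNa.induct)
  case (SNaI t)
  show ?case unfolding SN_def
  proof
    assume "\<exists>f. f 0 = t \<and> (\<forall>i. step (f i) (f (Suc i)))"
    then obtain f where f: "f 0 = t" "\<forall>i. step (f i) (f (Suc i))" by blast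
    hence "step t (f 1)" by (metis One_nat_def)
    hence "SN (f 1)" using SNaI by blast
    moreover have "\<exists>g. g 0 = f 1 \<and> (\<forall>i. step (g i) (g (Suc i)))"
      by (rule exI[of _ "\<lambda>i. f (Suc i)"]) (use f in simp)
    ultimately show False unfolding SN_def by blast
  qed
qed

lemma notSNa_step: "\<not> SNa x \<Longrightarrow> \<exists>y. step x y \<and> \<not> SNa y"
  using SNa.intros by blast

lemma SN_SNa: "SN t \<Longrightarrow> SNa t"
proof (rule ccontr)
  assume sn: "SN t" and ns: "\<not> SNa t"
  define f where "f = rec_nat t (\<lambda>_ x. SOME y. step x y \<and> \<not> SNa y)"
  have f0: "f 0 = t" by (simp add: f_def)
  have fS: "f (Suc i) = (SOME y. step (f i) y \<and> \<not> SNa y)" for i by (simp add: f_def)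
  have nf: "\<not> SNa (f i)" for i
  proof (induction i)
    case 0 thus ?case using ns f0 by simp
  next
    case (Suc i) thus ?case unfolding fS using someI_ex[OF notSNa_step[OF Suc]] by blast
  qed
  have "step (f i) (f (Suc i))" for i unfolding fS using someI_ex[OF notSNa_step[OF nf[of i]]] by blast
  with f0 sn show False unfolding SN_def by blast
qed

lemma SNa_step: "SNa t \<Longrightarrow> step t t' \<Longrightarrow> SNa t'"
  by (erule SNa.cases) blast

lemma SNa_steps: "step\<^sup>*\<^sup>* t t' \<Longrightarrow> SNa t \<Longrightarrow> SNa t'"
  by (induction rule: rtranclp_induct) (auto intro: SNa_step)

lemma SNa_induct_plus:
  assumes "SNa P"
    and step: "\<And>P. SNa P \<Longrightarrow> (\<And>P'. step\<^sup>+\<^sup>+ P P' \<Longrightarrow> Q P') \<Longrightarrow> Q P"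
  shows "Q P"
proof -
  have "\<forall>P'. step\<^sup>*\<^sup>* P P' \<longrightarrow> Q P'" using assms(1)
  proof (induction rule: SNa.induct)
    case (SNaI t)
    have sn: "SNa t" using SNaI by (blast intro: SNa.intros)
    have plus: "Q P'" if tp: "step\<^sup>+\<^sup>+ t P'" for P'
    proof -
      obtain t' where "step t t'" "step\<^sup>*\<^sup>* t' P'" using tranclpD[OF tp] by blast
      thus ?thesis using SNaI by blast
    qed
    show ?case
    proof (intro allI impI)
      fix P' assume "step\<^sup>*\<^sup>* t P'"
      hence "t = P' \<or> step\<^sup>+\<^sup>+ t P'" by (metis rtranclpD)
      thus "Q P'" using plus step[OF sn plus] by blast
    qed
  qed
  thus ?thesis by blast
qed

lemma step_foldl_App_head: "step a a' \<Longrightarrow> step (foldl App a vs) (foldl App a' vs)"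
  by (induction vs arbitrary: a a') (auto intro: step.appL)

lemma step_foldl_App_mid: "step v v' \<Longrightarrow> step (foldl App a (vs1 @ v # vs2)) (foldl App a (vs1 @ v' # vs2))"
  by (simp add: step_foldl_App_head step.appR)

lemma steps_foldl_App_head: "step\<^sup>*\<^sup>* a a' \<Longrightarrow> step\<^sup>*\<^sup>* (foldl App a vs) (foldl App a' vs)"
  by (induction rule: rtranclp_induct) (auto intro: rtranclp.rtrancl_into_rtrancl step_foldl_App_head)

lemma steps_ren: "step\<^sup>*\<^sup>* a a' \<Longrightarrow> step\<^sup>*\<^sup>* (ren f a) (ren f a')"
  by (induction rule: rtranclp_induct) (auto intro: rtranclp.rtrancl_into_rtrancl step_ren)

lemma steps_Lam: "step\<^sup>*\<^sup>* a a' \<Longrightarrow> step\<^sup>*\<^sup>* (Lam a) (Lam a')"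
  by (induction rule: rtranclp_induct) (auto intro: rtranclp.rtrancl_into_rtrancl step.lam)

lemma steps_App: "step\<^sup>*\<^sup>* a a' \<Longrightarrow> step\<^sup>*\<^sup>* b b' \<Longrightarrow> step\<^sup>*\<^sup>* (App a b) (App a' b')"
proof -
  assume 1: "step\<^sup>*\<^sup>* a a'" and 2: "step\<^sup>*\<^sup>* b b'"
  have "step\<^sup>*\<^sup>* (App a b) (App a' b)" using 1
    by (induction rule: rtranclp_induct) (auto intro: rtranclp.rtrancl_into_rtrancl step.appL)
  moreover have "step\<^sup>*\<^sup>* (App a' b) (App a' b')" using 2
    by (induction rule: rtranclp_induct) (auto intro: rtranclp.rtrancl_into_rtrancl step.appR)
  ultimately show ?thesis by simp
qed

lemma steps_Sub: "step\<^sup>*\<^sup>* a a' \<Longrightarrow> step\<^sup>*\<^sup>* b b' \<Longrightarrow> step\<^sup>*\<^sup>* (Sub a b) (Sub a' b')"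
proof -
  assume 1: "step\<^sup>*\<^sup>* a a'" and 2: "step\<^sup>*\<^sup>* b b'"
  have "step\<^sup>*\<^sup>* (Sub a b) (Sub a' b)" using 1
    by (induction rule: rtranclp_induct) (auto intro: rtranclp.rtrancl_into_rtrancl step.subL)
  moreover have "step\<^sup>*\<^sup>* (Sub a' b) (Sub a' b')" using 2
    by (induction rule: rtranclp_induct) (auto intro: rtranclp.rtrancl_into_rtrancl step.subR)
  ultimately show ?thesis by simp
qed

lemma steps_ups: "\<forall>j. step\<^sup>*\<^sup>* (s j) (s' j) \<Longrightarrow> \<forall>j. step\<^sup>*\<^sup>* (ups s j) (ups s' j)"
  by (intro allI, case_tac j) (auto intro: steps_ren)

lemma steps_psubst: "\<forall>j. step\<^sup>*\<^sup>* (s j) (s' j) \<Longrightarrow> step\<^sup>*\<^sup>* (psubst s t) (psubst s' t)"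
proof (induction t arbitrary: s s')
  case (Var x) thus ?case by simp
next
  case (Lam t) thus ?case using Lam.IH[OF steps_ups[OF Lam.prems]] by (simp add: steps_Lam)
next
  case (App t u) thus ?case using App.IH(1)[OF App.prems] App.IH(2)[OF App.prems] by (simp add: steps_App)
next
  case (Sub t u) thus ?case using Sub.IH(1)[OF steps_ups[OF Sub.prems]] Sub.IH(2)[OF Sub.prems] by (simp add: steps_Sub)
qed

lemma foldl_Sub_Lam_not_App: "foldl Sub (Lam s) L \<noteq> App a b"
  by (induction L rule: rev_induct) auto

lemma foldl_App_snoc_App: "vs \<noteq> [] \<Longrightarrow> \<exists>a b. foldl App a0 vs = App a b"
  by (induction vs rule: rev_induct) auto

lemma step_foldl_App: "step (foldl App a vs) X \<Longrightarrow>
   (\<exists>a'. step a a' \<and> X = foldl App a' vs) \<or>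
   (\<exists>vs1 v vs2 v'. vs = vs1 @ v # vs2 \<and> step v v' \<and> X = foldl App a (vs1 @ v' # vs2)) \<or>
   (\<exists>s L v vs'. vs = v # vs' \<and> a = foldl Sub (Lam s) L \<and> X = foldl App (foldl Sub (Sub s (lift (length L) 0 v)) L) vs')"
proof (induction vs arbitrary: X rule: rev_induct)
  case Nil thus ?case by simp
next
  case (snoc v vs)
  from snoc.prems have "step (App (foldl App a vs) v) X" by simp
  thus ?case
  proof (cases rule: step.cases)
    case (dB s L)
    show ?thesis
    proof (cases "vs = []")
      case True thus ?thesis using dB by auto
    next
      case False
      then obtain a1 b1 where "foldl App a vs = App a1 b1" using foldl_App_snoc_App by blast
      thus ?thesis using dB foldl_Sub_Lam_not_App by metis
    qed
  next
    case (appL t')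
    from appL have "step (foldl App a vs) t'" by simp
    from snoc.IH[OF this] show ?thesis
    proof (elim disjE exE conjE)
      fix a' assume "step a a'" "t' = foldl App a' vs"
      thus ?thesis using appL by auto
    next
      fix vs1 v0 vs2 v' assume "vs = vs1 @ v0 # vs2" "step v0 v'" "t' = foldl App a (vs1 @ v' # vs2)"
      hence "vs @ [v] = vs1 @ v0 # (vs2 @ [v]) \<and> step v0 v' \<and> X = foldl App a (vs1 @ v' # (vs2 @ [v]))" using appL by simp
      thus ?thesis by blast
    next
      fix s L v1 vs' assume "vs = v1 # vs'" "a = foldl Sub (Lam s) L" "t' = foldl App (foldl Sub (Sub s (lift (length L) 0 v1)) L) vs'"
      hence "vs @ [v] = v1 # (vs' @ [v]) \<and> a = foldl Sub (Lam s) L \<and> X = foldl App (foldl Sub (Sub s (lift (length L) 0 v1)) L) (vs' @ [v])" using appL by simp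
      thus ?thesis by blast
    qed
  next
    case (appR v')
    hence "vs @ [v] = vs @ v # [] \<and> step v v' \<and> X = foldl App a (vs @ v' # [])" by simp
    thus ?thesis by blast
  qed
qed

definition root :: "trm \<Rightarrow> trm \<Rightarrow> trm \<Rightarrow> bool" where
  "root B w Z \<longleftrightarrow> (occ 0 B \<le> 1 \<and> Z = subst B 0 w) \<or>
     (\<exists>B'. 2 \<le> occ 0 B \<and> split 0 B B' \<and> 1 \<le> occ 0 B' \<and> 1 \<le> occ 1 B' \<and> Z = Sub (Sub B' (lift 1 0 w)) w)"

lemma step_foldl_Sub: "step (foldl Sub t ws) Y \<Longrightarrow>
   (\<exists>t'. step t t' \<and> Y = foldl Sub t' ws) \<or>
   (\<exists>ws1 w ws2 w'. ws = ws1 @ w # ws2 \<and> step w w' \<and> Y = foldl Sub t (ws1 @ w' # ws2)) \<or>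
   (\<exists>ws1 w ws2 Z. ws = ws1 @ w # ws2 \<and> Y = foldl Sub Z ws2 \<and> root (foldl Sub t ws1) w Z)"
proof (induction ws arbitrary: Y rule: rev_induct)
  case Nil thus ?case by simp
next
  case (snoc w ws)
  from snoc.prems have "step (Sub (foldl Sub t ws) w) Y" by simp
  thus ?case
  proof (cases rule: step.cases)
    case w hence "root (foldl Sub t ws) w Y" by (auto simp: root_def)
    hence "ws @ [w] = ws @ w # [] \<and> Y = foldl Sub Y [] \<and> root (foldl Sub t ws) w Y" by simp
    thus ?thesis by blast
  next
    case d hence "root (foldl Sub t ws) w Y" by (auto simp: root_def)
    hence "ws @ [w] = ws @ w # [] \<and> Y = foldl Sub Y [] \<and> root (foldl Sub t ws) w Y" by simp
    thus ?thesis by blast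
  next
    case (c B') hence "root (foldl Sub t ws) w Y" by (auto simp: root_def)
    hence "ws @ [w] = ws @ w # [] \<and> Y = foldl Sub Y [] \<and> root (foldl Sub t ws) w Y" by simp
    thus ?thesis by blast
  next
    case (subL t')
    from subL have "step (foldl Sub t ws) t'" by simp
    from snoc.IH[OF this] show ?thesis
    proof (elim disjE exE conjE)
      fix a' assume "step t a'" "t' = foldl Sub a' ws"
      thus ?thesis using subL by auto
    next
      fix vs1 v0 vs2 v' assume "ws = vs1 @ v0 # vs2" "step v0 v'" "t' = foldl Sub t (vs1 @ v' # vs2)"
      hence "ws @ [w] = vs1 @ v0 # (vs2 @ [w]) \<and> step v0 v' \<and> Y = foldl Sub t (vs1 @ v' # (vs2 @ [w]))" using subL by simp
      thus ?thesis by blast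
    next
      fix vs1 v0 vs2 Z assume "ws = vs1 @ v0 # vs2" "t' = foldl Sub Z vs2" "root (foldl Sub t vs1) v0 Z"
      hence "ws @ [w] = vs1 @ v0 # (vs2 @ [w]) \<and> Y = foldl Sub Z (vs2 @ [w]) \<and> root (foldl Sub t vs1) v0 Z" using subL by simp
      thus ?thesis by blast
    qed
  next
    case (subR w')
    hence "ws @ [w] = ws @ w # [] \<and> step w w' \<and> Y = foldl Sub t (ws @ w' # [])" by simp
    thus ?thesis by blast
  qed
qed

fun lifts :: "trm list \<Rightarrow> trm list" where
  "lifts [] = []"
| "lifts (u # us) = lift (length us) 0 u # lifts us"

lemma length_lifts[simp]: "length (lifts us) = length us"
  by (induction us) auto

lemma jumps_lifts: "jumps t us = foldl Sub t (lifts us)"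
  by (induction us arbitrary: t) auto

lemma lifts_append: "lifts (xs @ ys) = map (lift (length ys) 0) (lifts xs) @ lifts ys"
  by (induction xs) (auto simp: lift_lift0 add.commute)

definition sig :: "trm list \<Rightarrow> nat \<Rightarrow> trm" where
  "sig us j = (if j < length us then us ! j else Var (j - length us))"

lemma sig_add: "sig us (i + length us) = Var i"
  by (simp add: sig_def)

lemma msubsts_psubst: "msubsts t us = psubst (sig us) t"
proof (induction us arbitrary: t)
  case Nil
  have "sig [] = Var" by (rule ext) (simp add: sig_def)
  thus ?case by (simp add: psubst_Var)
next
  case (Cons u us)
  have "psubst (sig us) \<circ> substf 0 (lift (length us) 0 u) = sig (u # us)"
  proof
    fix j show "(psubst (sig us) \<circ> substf 0 (lift (length us) 0 u)) j = sig (u # us) j"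
    proof (cases j)
      case 0
      have "sig us \<circ> (\<lambda>i. i + length us) = Var" by (rule ext) (simp add: sig_add)
      thus ?thesis using 0 by (simp add: substf_def lift0 psubst_ren psubst_Var sig_def)
    next
      case (Suc j') thus ?thesis by (simp add: substf_def sig_def)
    qed
  qed
  thus ?case using Cons by (simp add: subst_psubst psubst_psubst)
qed

fun Mf :: "trm \<Rightarrow> nat \<Rightarrow> trm list \<Rightarrow> trm multiset" where
  "Mf t k [] = {#}"
| "Mf t k (u # us) = replicate_mset (max 1 (occ k t)) u + Mf t (Suc k) us"

fun Nf :: "trm \<Rightarrow> nat \<Rightarrow> trm list \<Rightarrow> nat" where
  "Nf t k [] = 0"
| "Nf t k (u # us) = occ k t ^ 2 + Nf t (Suc k) us"

lemma Mf_append: "Mf t k (xs @ ys) = Mf t k xs + Mf t (k + length xs) ys"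
  by (induction xs arbitrary: k) auto

lemma Nf_append: "Nf t k (xs @ ys) = Nf t k xs + Nf t (k + length xs) ys"
  by (induction xs arbitrary: k) auto

lemma Mf_cong: "(\<forall>i < length us. occ (k + i) t = occ (k' + i) t') \<Longrightarrow> Mf t k us = Mf t' k' us"
proof (induction us arbitrary: k k')
  case (Cons u us)
  have "occ k t = occ k' t'" using Cons.prems[rule_format, of 0] by simp
  moreover have "Mf t (Suc k) us = Mf t' (Suc k') us"
  proof (intro Cons.IH allI impI)
    fix i assume "i < length us"
    thus "occ (Suc k + i) t = occ (Suc k' + i) t'" using Cons.prems[rule_format, of "Suc i"] by simp
  qed
  ultimately show ?case by simp
qed simp

lemma Nf_cong: "(\<forall>i < length us. occ (k + i) t = occ (k' + i) t') \<Longrightarrow> Nf t k us = Nf t' k' us"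
proof (induction us arbitrary: k k')
  case (Cons u us)
  have "occ k t = occ k' t'" using Cons.prems[rule_format, of 0] by simp
  moreover have "Nf t (Suc k) us = Nf t' (Suc k') us"
  proof (intro Cons.IH allI impI)
    fix i assume "i < length us"
    thus "occ (Suc k + i) t = occ (Suc k' + i) t'" using Cons.prems[rule_format, of "Suc i"] by simp
  qed
  ultimately show ?case by simp
qed simp

definition rel :: "(trm \<times> trm) set" where
  "rel = {(u', u). SNa u \<and> step u u'}"

lemma wf_rel: "wf rel"
  unfolding wf_def
proof (intro allI impI)
  fix P :: "trm \<Rightarrow> bool" and x
  assume H: "\<forall>x. (\<forall>y. (y, x) \<in> rel \<longrightarrow> P y) \<longrightarrow> P x"
  show "P x"
  proof (cases "SNa x")
    case True thus ?thesis
    proof (induction rule: SNa.induct)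
      case (SNaI x)
      have "\<forall>y. (y, x) \<in> rel \<longrightarrow> P y" using SNaI by (auto simp: rel_def)
      thus ?case using H by blast
    qed
  next
    case False thus ?thesis using H by (simp add: rel_def)
  qed
qed

definition R :: "((trm multiset \<times> nat) \<times> (trm multiset \<times> nat)) set" where
  "R = mult rel <*lex*> less_than"

lemma wf_R: "wf R"
  unfolding R_def by (intro wf_lex_prod wf_mult wf_rel wf_less_than)

lemma foldl_Sub_eq_Lam: "foldl Sub t ws = foldl Sub (Lam s) L \<Longrightarrow> \<exists>L0. L = L0 @ ws \<and> t = foldl Sub (Lam s) L0"
proof (induction ws arbitrary: L rule: rev_induct)
  case Nil thus ?case by simp
next
  case (snoc w ws)
  show ?case
  proof (cases L rule: rev_cases)
    case Nil thus ?thesis using snoc.prems by simp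
  next
    case (snoc L' l)
    with snoc.prems have "foldl Sub t ws = foldl Sub (Lam s) L'" "l = w" by simp_all
    from snoc.IH[OF this(1)] obtain L0 where "L' = L0 @ ws" "t = foldl Sub (Lam s) L0" by blast
    thus ?thesis using snoc \<open>l = w\<close> by auto
  qed
qed

lemma lifts_split: "lifts us = ws1 @ w # ws2 \<Longrightarrow> \<exists>us1 u us2. us = us1 @ u # us2 \<and> length us1 = length ws1 \<and>
   w = lift (length us2) 0 u \<and> ws1 = map (lift (Suc (length us2)) 0) (lifts us1) \<and> ws2 = lifts us2"
proof -
  assume H: "lifts us = ws1 @ w # ws2"
  define xs where "xs = take (length ws1) us"
  define ys where "ys = drop (length ws1) us"
  have us: "us = xs @ ys" by (simp add: xs_def ys_def)
  have "length us = length ws1 + Suc (length ws2)" using arg_cong[OF H, of length] by simp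
  hence lx: "length xs = length ws1" by (simp add: xs_def)
  have "map (lift (length ys) 0) (lifts xs) @ lifts ys = ws1 @ w # ws2" using H us lifts_append by simp
  hence e1: "map (lift (length ys) 0) (lifts xs) = ws1" and e2: "lifts ys = w # ws2" using lx
    by (simp_all add: append_eq_append_conv)
  then obtain u us2 where ys: "ys = u # us2" by (cases ys) auto
  show ?thesis using e1 e2 ys us lx by (intro exI[of _ xs] exI[of _ u] exI[of _ us2]) auto
qed

lemma occL_lifts: "i < c \<Longrightarrow> occL i (map (lift c 0) (lifts xs)) = 0"
proof (induction xs)
  case (Cons x xs)
  have "occ (i + length xs) (lift c 0 (lift (length xs) 0 x)) = 0"
    using Cons.prems by (simp add: lift_lift0 occ_lift0_lt)
  thus ?case using Cons by simp
qed simp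

lemma psL_lifts: "psL (substf 0 s) (map (lift (Suc n) 0) (lifts xs)) = map (lift n 0) (lifts xs)"
proof (induction xs)
  case (Cons x xs)
  have e: "substf 0 s \<circ> (\<lambda>i. i + Suc n) = Var \<circ> (\<lambda>i. i + n)" by (rule ext) (simp add: substf_def)
  have "psubst (upsn (length xs) (substf 0 s)) (lift (Suc n) 0 (lift (length xs) 0 x))
      = psubst (upsn (length xs) (substf 0 s)) (lift (length xs) 0 (lift (Suc n) 0 x))"
    by (simp add: lift_lift0 add.commute)
  also have "\<dots> = lift (length xs) 0 (psubst (substf 0 s) (lift (Suc n) 0 x))" by (rule psubst_lift)
  also have "psubst (substf 0 s) (lift (Suc n) 0 x) = lift n 0 x"
    by (simp only: lift0 psubst_ren e ren_psubst_Var[symmetric])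
  finally show ?case using Cons by (simp add: lift_lift0 add.commute)
qed simp

fun liftL :: "nat \<Rightarrow> trm list \<Rightarrow> trm list" where
  "liftL d [] = []"
| "liftL d (l # L) = lift 1 (d + length L) l # liftL d L"

lemma split_foldl: "split d (foldl Sub a L) B' \<Longrightarrow> occL d L = 0 \<Longrightarrow>
   \<exists>a'. split (d + length L) a a' \<and> B' = foldl Sub a' (liftL d L)"
proof (induction L arbitrary: a)
  case Nil thus ?case by simp
next
  case (Cons l L)
  from Cons.prems have "split d (foldl Sub (Sub a l) L) B'" "occL d L = 0" by simp_all
  from Cons.IH[OF this] obtain a'' where a'': "split (d + length L) (Sub a l) a''" "B' = foldl Sub a'' (liftL d L)" by blast
  from a''(1) obtain a' l' where "a'' = Sub a' l'" "split (Suc (d + length L)) a a'" "split (d + length L) l l'"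
    by (cases rule: split.cases) auto
  moreover have "occ (d + length L) l = 0" using Cons.prems by simp
  ultimately have "l' = lift 1 (d + length L) l" using split_no_occ by blast
  thus ?case using a'' \<open>a'' = Sub a' l'\<close> \<open>split (Suc (d + length L)) a a'\<close> by auto
qed

lemma lift1_lift0: "c \<le> a \<Longrightarrow> lift 1 c (lift a 0 x) = lift (Suc a) 0 x"
proof -
  assume "c \<le> a"
  hence eq: "liftf 1 c \<circ> (\<lambda>i. i + a) = (\<lambda>i. i + Suc a)" by (auto simp: liftf_def)
  have "lift 1 c (lift a 0 x) = ren (liftf 1 c) (ren (\<lambda>i. i + a) x)" by (simp only: lift_ren[of 1 c] lift0)
  also have "\<dots> = ren (\<lambda>i. i + Suc a) x" by (simp only: ren_ren eq)
  also have "\<dots> = lift (Suc a) 0 x" by (simp only: lift0)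
  finally show ?thesis .
qed

lemma liftL_lifts: "liftL 0 (map (lift (Suc n) 0) (lifts xs)) = map (lift (Suc (Suc n)) 0) (lifts xs)"
  by (induction xs) (auto simp: lift_lift0 lift1_lift0[simplified])

lemma Mf_dec: "SNa u \<Longrightarrow> step u u' \<Longrightarrow> 1 \<le> k \<Longrightarrow>
   (A + replicate_mset k u' + C, A + replicate_mset k u + C) \<in> mult rel"
proof -
  assume a: "SNa u" "step u u'" "1 \<le> k"
  have "(A + C + replicate_mset k u', A + C + replicate_mset k u) \<in> mult rel"
    by (rule one_step_implies_mult) (use a in \<open>auto simp: rel_def\<close>)
  thus ?thesis by (simp add: ac_simps)
qed

lemma Mf_rem: "1 \<le> k \<Longrightarrow> (A + C, A + replicate_mset k u + C) \<in> mult rel"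
proof -
  assume a: "1 \<le> k"
  have "(A + C + {#}, A + C + replicate_mset k u) \<in> mult rel"
    by (rule one_step_implies_mult) (use a in auto)
  thus ?thesis by (simp add: ac_simps)
qed

lemma psubst_sig_lift: "psubst (upsn n (sig us)) (lift (n + length us) 0 v) = lift n 0 v"
proof -
  have "sig us \<circ> (\<lambda>i. i + length us) = Var" by (rule ext) (simp add: sig_add)
  hence e: "psubst (sig us) (lift (length us) 0 v) = v" by (simp add: lift0 psubst_ren psubst_Var)
  have "lift (n + length us) 0 v = lift n 0 (lift (length us) 0 v)" by (simp add: lift_lift0)
  thus ?thesis by (simp add: psubst_lift e del: upsn.simps)
qed

lemma sig_update: "sig (us1 @ u # us2) j = (if j = length us1 then u else sig (us1 @ u' # us2) j)"
  by (cases "j < length us1"; cases "j = length us1")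
     (auto simp: sig_def nth_append nth_Cons' not_less)

lemma steps_sig: "step u u' \<Longrightarrow> \<forall>j. step\<^sup>*\<^sup>* (sig (us1 @ u # us2) j) (sig (us1 @ u' # us2) j)"
proof
  fix j assume "step u u'"
  thus "step\<^sup>*\<^sup>* (sig (us1 @ u # us2) j) (sig (us1 @ u' # us2) j)"
    using sig_update[of us1 u us2 j u'] sig_update[of us1 u' us2 j u']
    by (cases "j = length us1") auto
qed

lemma sig_tau: "psubst (sig (us1 @ us2)) \<circ> upsn (length us1) (substf 0 (lift (length us2) 0 u)) = sig (us1 @ u # us2)"
proof
  fix j
  let ?k = "length us1" and ?n = "length us2"
  show "(psubst (sig (us1 @ us2)) \<circ> upsn ?k (substf 0 (lift ?n 0 u))) j = sig (us1 @ u # us2) j"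
  proof (cases "j < ?k")
    case True thus ?thesis by (simp add: upsn_lt sig_def nth_append del: upsn.simps)
  next
    case False
    hence up: "upsn ?k (substf 0 (lift ?n 0 u)) j = ren (\<lambda>i. i + ?k) (substf 0 (lift ?n 0 u) (j - ?k))"
      by (simp add: upsn_ge del: upsn.simps)
    show ?thesis
    proof (cases "j = ?k")
      case True
      have e: "sig (us1 @ us2) \<circ> ((\<lambda>i. i + ?k) \<circ> (\<lambda>i. i + ?n)) = Var"
        by (rule ext) (simp add: sig_def)
      have "psubst (sig (us1 @ us2)) (ren (\<lambda>i. i + ?k) (lift ?n 0 u)) = u"
        by (simp only: lift0 ren_ren psubst_ren e psubst_Var)
      thus ?thesis using True up by (simp add: substf_def sig_def del: upsn.simps)
    next
      case False
      with \<open>\<not> j < ?k\<close> have gt: "?k < j" by simp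
      hence "upsn ?k (substf 0 (lift ?n 0 u)) j = Var (j - 1)" using up by (simp add: substf_def del: upsn.simps)
      moreover have "sig (us1 @ us2) (j - 1) = sig (us1 @ u # us2) j"
        using gt by (cases j) (auto simp: sig_def nth_append nth_Cons' not_less)
      ultimately show ?thesis by simp
    qed
  qed
qed

lemma occ_tau_lt: "i < k \<Longrightarrow> occ i (psubst (upsn k (substf 0 w)) t) = occ i t"
proof (rule occ_psubst, rule allI)
  fix x assume "i < k"
  show "occ i (upsn k (substf 0 w) x) = (if x = i then 1 else 0)"
  proof (cases "x < k")
    case True thus ?thesis by (simp add: upsn_lt del: upsn.simps)
  next
    case False
    hence "upsn k (substf 0 w) x = ren (\<lambda>j. j + k) (substf 0 w (x - k))" by (simp add: upsn_ge del: upsn.simps)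
    moreover have "occ i (ren (\<lambda>j. j + k) (substf 0 w (x - k))) = 0" by (rule occ_ren_none) (use \<open>i < k\<close> in auto)
    ultimately show ?thesis using False \<open>i < k\<close> by simp
  qed
qed

lemma occ_tau_ge: "i < n \<Longrightarrow> occ (k + i) (psubst (upsn k (substf 0 (lift n 0 u))) t) = occ (Suc (k + i)) t"
proof (rule occ_psubst, rule allI)
  fix x assume "i < n"
  show "occ (k + i) (upsn k (substf 0 (lift n 0 u)) x) = (if x = Suc (k + i) then 1 else 0)"
  proof (cases "x < k")
    case True thus ?thesis by (simp add: upsn_lt del: upsn.simps)
  next
    case False
    hence up: "upsn k (substf 0 (lift n 0 u)) x = ren (\<lambda>j. j + k) (substf 0 (lift n 0 u) (x - k))" by (simp add: upsn_ge del: upsn.simps)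
    show ?thesis
    proof (cases "x = k")
      case True
      have "ren (\<lambda>j. j + k) (lift n 0 u) = ren (\<lambda>j. j + n + k) u" by (simp add: lift0 ren_ren comp_def)
      moreover have "occ (k + i) (ren (\<lambda>j. j + n + k) u) = 0" by (rule occ_ren_none) (use \<open>i < n\<close> in auto)
      ultimately show ?thesis using up True by (simp add: substf_def)
    next
      case False
      with \<open>\<not> x < k\<close> have "k < x" by simp
      thus ?thesis using up by (auto simp: substf_def)
    qed
  qed
qed

lemma sig_dup:
  assumes "us = us1 @ u # us2" "us' = us1 @ u # u # us2" "k = length us1"
  shows "(\<forall>i<k. sig us' i = sig us i) \<and> sig us' k = sig us k \<and> sig us' (Suc k) = sig us k \<and>
     (\<forall>i>k. sig us' (Suc i) = sig us i)"
  using assms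
  by (auto simp: sig_def nth_append nth_Cons' not_less)

definition Qp :: "trm \<Rightarrow> bool" where
  "Qp P \<longleftrightarrow> (\<forall>t us vs. (\<forall>u\<in>set us. SNa u) \<longrightarrow> P = foldl App (psubst (sig us) t) vs \<longrightarrow>
      SNa (foldl App (jumps t us) vs))"

lemma replicate_mset_plus: "replicate_mset (a + b) x = replicate_mset a x + replicate_mset b x"
  by (induction a) auto

lemma main_step:
  assumes snP: "SNa P" and IHP: "\<And>P'. step\<^sup>+\<^sup>+ P P' \<Longrightarrow> Qp P'"
  shows "Qp P"
proof -
  have viaP: "\<And>t' us' vs'. step\<^sup>+\<^sup>+ P (foldl App (psubst (sig us') t') vs') \<Longrightarrow> \<forall>u\<in>set us'. SNa u \<Longrightarrow>
       SNa (foldl App (jumps t' us') vs')"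
    using IHP unfolding Qp_def by blast
  have "\<forall>t us vs. (Mf t 0 us, Nf t 0 us) = p \<longrightarrow> (\<forall>u\<in>set us. SNa u) \<longrightarrow>
      P = foldl App (psubst (sig us) t) vs \<longrightarrow> SNa (foldl App (jumps t us) vs)" for p
  proof (induction p rule: wf_induct[OF wf_R])
    case (1 p)
    show ?case
    proof (intro allI impI)
      fix t us vs
      assume mp: "(Mf t 0 us, Nf t 0 us) = p" and snu: "\<forall>u\<in>set us. SNa u"
        and Pe: "P = foldl App (psubst (sig us) t) vs"
      have IHM: "\<And>t' us' vs'. ((Mf t' 0 us', Nf t' 0 us'), (Mf t 0 us, Nf t 0 us)) \<in> R \<Longrightarrow>
          \<forall>u\<in>set us'. SNa u \<Longrightarrow> P = foldl App (psubst (sig us') t') vs' \<Longrightarrow> SNa (foldl App (jumps t' us') vs')"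
        using 1 mp by blast
      show "SNa (foldl App (jumps t us) vs)"
      proof (rule SNaI)
        fix X assume st: "step (foldl App (jumps t us) vs) X"
        have jl: "jumps t us = foldl Sub t (lifts us)" by (rule jumps_lifts)
        from step_foldl_App[OF st] show "SNa X"
        proof (elim disjE exE conjE)
          fix Y assume stY: "step (jumps t us) Y" and X: "X = foldl App Y vs"
          from step_foldl_Sub[OF stY[unfolded jl]] show "SNa X"
          proof (elim disjE exE conjE)
            fix t' assume "step t t'" "Y = foldl Sub t' (lifts us)"
            hence X': "X = foldl App (jumps t' us) vs" using X by (simp add: jumps_lifts)
            have "step P (foldl App (psubst (sig us) t') vs)"
              using Pe step_foldl_App_head step_psubst \<open>step t t'\<close> by simp
            thus "SNa X" using viaP snu X' by blast
          next
            fix ws1 w ws2 w' assume ws: "lifts us = ws1 @ w # ws2" and sw: "step w w'"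
              and Y: "Y = foldl Sub t (ws1 @ w' # ws2)"
            from lifts_split[OF ws] obtain us1 u us2 where
              us: "us = us1 @ u # us2" and l1: "length us1 = length ws1" and wu: "w = lift (length us2) 0 u"
              and ws1: "ws1 = map (lift (Suc (length us2)) 0) (lifts us1)" and ws2: "ws2 = lifts us2" by blast
            from step_lift_inv[OF sw[unfolded wu]] obtain u' where w': "w' = lift (length us2) 0 u'"
              and su: "step u u'" by blast
            define us' where "us' = us1 @ u' # us2"
            have X': "X = foldl App (jumps t us') vs"
              using X Y by (simp add: jumps_lifts us'_def lifts_append ws1 ws2 w')
            have snuu: "SNa u" using snu us by simp
            have snu': "\<forall>x\<in>set us'. SNa x"
              using snu SNa_step[OF snuu su] by (auto simp: us us'_def)
            have "step\<^sup>*\<^sup>* (psubst (sig us) t) (psubst (sig us') t)"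
              using steps_psubst[OF steps_sig[OF su]] by (simp add: us us'_def)
            hence stP: "step\<^sup>*\<^sup>* P (foldl App (psubst (sig us') t) vs)" using Pe steps_foldl_App_head by simp
            show "SNa X"
            proof (cases "P = foldl App (psubst (sig us') t) vs")
              case True
              have "Mf t 0 us = Mf t 0 us1 + replicate_mset (max 1 (occ (length us1) t)) u + Mf t (Suc (length us1)) us2"
                by (simp add: us Mf_append add.assoc)
              moreover have "Mf t 0 us' = Mf t 0 us1 + replicate_mset (max 1 (occ (length us1) t)) u' + Mf t (Suc (length us1)) us2"
                by (simp add: us'_def Mf_append add.assoc)
              ultimately have "(Mf t 0 us', Mf t 0 us) \<in> mult rel"
                using Mf_dec[OF snuu su, of "max 1 (occ (length us1) t)" "Mf t 0 us1" "Mf t (Suc (length us1)) us2"] by simp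
              hence "((Mf t 0 us', Nf t 0 us'), (Mf t 0 us, Nf t 0 us)) \<in> R" by (simp add: R_def)
              thus "SNa X" using IHM snu' True X' by blast
            next
              case False
              hence "step\<^sup>+\<^sup>+ P (foldl App (psubst (sig us') t) vs)" using stP by (metis rtranclpD)
              thus "SNa X" using viaP snu' X' by blast
            qed
          next
            fix ws1 w ws2 Z assume ws: "lifts us = ws1 @ w # ws2" and Y: "Y = foldl Sub Z ws2"
              and rt: "root (foldl Sub t ws1) w Z"
            from lifts_split[OF ws] obtain us1 u us2 where
              us: "us = us1 @ u # us2" and l1: "length us1 = length ws1" and wu: "w = lift (length us2) 0 u"
              and ws1: "ws1 = map (lift (Suc (length us2)) 0) (lifts us1)" and ws2: "ws2 = lifts us2" by blast
            let ?k = "length us1" and ?n = "length us2"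
            have occB: "occ 0 (foldl Sub t ws1) = occ ?k t"
              using occL_lifts[of 0 "Suc ?n" us1] by (simp add: occ_foldl ws1)
            from rt[unfolded root_def] show "SNa X"
            proof (elim disjE exE conjE)
              assume o1: "occ 0 (foldl Sub t ws1) \<le> 1" and Z: "Z = subst (foldl Sub t ws1) 0 w"
              define t2 where "t2 = psubst (upsn ?k (substf 0 w)) t"
              define us' where "us' = us1 @ us2"
              have "Z = foldl Sub t2 (map (lift ?n 0) (lifts us1))"
                by (simp add: Z subst_psubst psubst_foldl ws1 psL_lifts t2_def del: upsn.simps)
              hence X': "X = foldl App (jumps t2 us') vs"
                using X Y by (simp add: jumps_lifts us'_def lifts_append ws2)
              have Pe': "P = foldl App (psubst (sig us') t2) vs"
                using Pe by (simp add: t2_def psubst_psubst us'_def wu sig_tau us del: upsn.simps)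
              have snu': "\<forall>x\<in>set us'. SNa x" using snu by (auto simp: us us'_def)
              have m1: "Mf t2 0 us1 = Mf t 0 us1"
                by (rule Mf_cong) (simp add: t2_def occ_tau_lt del: upsn.simps)
              have m2: "Mf t2 ?k us2 = Mf t (Suc ?k) us2"
                by (rule Mf_cong) (simp add: t2_def wu occ_tau_ge del: upsn.simps)
              have "Mf t2 0 us' = Mf t 0 us1 + Mf t (Suc ?k) us2"
                using m1 m2 by (simp add: us'_def Mf_append)
              moreover have "Mf t 0 us = Mf t 0 us1 + replicate_mset (max 1 (occ ?k t)) u + Mf t (Suc ?k) us2"
                by (simp add: us Mf_append add.assoc)
              ultimately have "(Mf t2 0 us', Mf t 0 us) \<in> mult rel"
                using Mf_rem[of "max 1 (occ ?k t)" "Mf t 0 us1" "Mf t (Suc ?k) us2" u] by simp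
              hence "((Mf t2 0 us', Nf t2 0 us'), (Mf t 0 us, Nf t 0 us)) \<in> R" by (simp add: R_def)
              thus "SNa X" using IHM snu' Pe' X' by blast
            next
              fix B' assume sp: "split 0 (foldl Sub t ws1) B'"
                and a1: "1 \<le> occ 0 B'" and b1: "1 \<le> occ 1 B'" and Z: "Z = Sub (Sub B' (lift 1 0 w)) w"
              have "occL 0 ws1 = 0" using occL_lifts[of 0 "Suc ?n" us1] by (simp add: ws1)
              from split_foldl[OF sp this] obtain t' where spt0: "split (0 + length ws1) t t'"
                and B': "B' = foldl Sub t' (liftL 0 ws1)" by blast
              have spt: "split ?k t t'" using spt0 l1 by simp
              have B'2: "B' = foldl Sub t' (map (lift (Suc (Suc ?n)) 0) (lifts us1))"
                using B' by (simp add: ws1 liftL_lifts)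
              define us' where "us' = us1 @ u # u # us2"
              have lu: "lifts us' = map (lift (Suc (Suc ?n)) 0) (lifts us1) @ lift (Suc ?n) 0 u # lift ?n 0 u # lifts us2"
                by (simp add: us'_def lifts_append)
              have X': "X = foldl App (jumps t' us') vs"
                using X Y Z B'2 by (simp add: jumps_lifts lu wu ws2 lift_lift0)
              have sd: "(\<forall>i<?k. sig us' i = sig us i) \<and> sig us' ?k = sig us ?k \<and> sig us' (Suc ?k) = sig us ?k \<and>
                 (\<forall>i>?k. sig us' (Suc i) = sig us i)"
                by (rule sig_dup[OF us us'_def refl])
              have "psubst (sig us') t' = psubst (sig us) t"
                using split_psubst_eq[OF spt, where s'="sig us'" and s="sig us"] sd by blast
              hence Pe': "P = foldl App (psubst (sig us') t') vs" using Pe by simp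
              have snu': "\<forall>x\<in>set us'. SNa x" using snu by (auto simp: us us'_def)
              define a where "a = occ ?k t'"
              define b where "b = occ (Suc ?k) t'"
              have a1': "1 \<le> a" using a1 occL_lifts[of 0 "Suc (Suc ?n)" us1] by (simp add: B'2 occ_foldl a_def)
              have b1': "1 \<le> b" using b1 occL_lifts[of 1 "Suc (Suc ?n)" us1] by (simp add: B'2 occ_foldl b_def)
              have ab: "occ ?k t = a + b" using split_occ_eq[OF spt] by (simp add: a_def b_def)
              have m1: "Mf t' 0 us1 = Mf t 0 us1" by (rule Mf_cong) (simp add: split_occ_lt[OF spt])
              have m2: "Mf t' (Suc (Suc ?k)) us2 = Mf t (Suc ?k) us2" by (rule Mf_cong) (simp add: split_occ_gt[OF spt])
              have n1: "Nf t' 0 us1 = Nf t 0 us1" by (rule Nf_cong) (simp add: split_occ_lt[OF spt])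
              have n2: "Nf t' (Suc (Suc ?k)) us2 = Nf t (Suc ?k) us2" by (rule Nf_cong) (simp add: split_occ_gt[OF spt])
              have "Mf t' 0 us' = Mf t 0 us1 + replicate_mset a u + replicate_mset b u + Mf t (Suc ?k) us2"
                using m1 m2 a1' b1' by (simp add: us'_def Mf_append a_def[symmetric] b_def[symmetric] add.assoc)
              moreover have "Mf t 0 us = Mf t 0 us1 + replicate_mset a u + replicate_mset b u + Mf t (Suc ?k) us2"
                using a1' by (simp add: us Mf_append ab replicate_mset_plus add.assoc)
              ultimately have meq: "Mf t' 0 us' = Mf t 0 us" by simp
              have "Nf t' 0 us' = Nf t 0 us1 + a^2 + b^2 + Nf t (Suc ?k) us2"
                using n1 n2 by (simp add: us'_def Nf_append a_def[symmetric] b_def[symmetric])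
              moreover have "Nf t 0 us = Nf t 0 us1 + (a + b)^2 + Nf t (Suc ?k) us2"
                by (simp add: us Nf_append ab)
              moreover have "a^2 + b^2 < (a + b)^2"
              proof -
                have "0 < a * b" using a1' b1' by simp
                thus ?thesis by (simp add: power2_sum)
              qed
              ultimately have "Nf t' 0 us' < Nf t 0 us" by simp
              hence "((Mf t' 0 us', Nf t' 0 us'), (Mf t 0 us, Nf t 0 us)) \<in> R" using meq by (simp add: R_def)
              thus "SNa X" using IHM snu' Pe' X' by blast
            qed
          qed
        next
          fix vs1 v vs2 v' assume vs: "vs = vs1 @ v # vs2" and sv: "step v v'"
            and X: "X = foldl App (jumps t us) (vs1 @ v' # vs2)"
          have "step P (foldl App (psubst (sig us) t) (vs1 @ v' # vs2))"
            using Pe vs step_foldl_App_mid[OF sv] by simp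
          thus "SNa X" using viaP snu X by blast
        next
          fix s L v vs' assume vs: "vs = v # vs'" and jL: "jumps t us = foldl Sub (Lam s) L"
            and X: "X = foldl App (foldl Sub (Sub s (lift (length L) 0 v)) L) vs'"
          from foldl_Sub_eq_Lam[OF jL[unfolded jl]] obtain L0 where
            L0: "L = L0 @ lifts us" "t = foldl Sub (Lam s) L0" by blast
          define t2 where "t2 = foldl Sub (Sub s (lift (length L0 + length us) 0 v)) L0"
          have X': "X = foldl App (jumps t2 us) vs'" using X L0 by (simp add: t2_def jumps_lifts)
          let ?s = "upsn (length L0) (sig us)"
          have e1: "psubst (sig us) t = foldl Sub (Lam (psubst (ups ?s) s)) (psL (sig us) L0)"
            using L0 by (simp add: psubst_foldl del: upsn.simps)
          have e2: "psubst (sig us) t2 = foldl Sub (Sub (psubst (ups ?s) s) (lift (length L0) 0 v)) (psL (sig us) L0)"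
            by (simp add: t2_def psubst_foldl psubst_sig_lift del: upsn.simps)
          have "step (App (foldl Sub (Lam (psubst (ups ?s) s)) (psL (sig us) L0)) v)
                   (foldl Sub (Sub (psubst (ups ?s) s) (lift (length (psL (sig us) L0)) 0 v)) (psL (sig us) L0))"
            by (rule step.dB)
          hence "step P (foldl App (psubst (sig us) t2) vs')"
            using Pe vs e1 e2 step_foldl_App_head by simp
          thus "SNa X" using viaP snu X' by blast
        qed
      qed
    qed
  qed
  thus ?thesis unfolding Qp_def by blast
qed

lemma main: "SNa P \<Longrightarrow> Qp P"
  by (rule SNa_induct_plus) (auto intro: main_step)

theorem theorem18:
  fixes t :: trm and us vs :: "trm list"
  assumes "us \<noteq> []"
    and "\<forall>u \<in> set us. SN u"
    and "SN (foldl App (msubsts t us) vs)"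
  shows "SN (foldl App (jumps t us) vs)"
proof -
  have snP: "SNa (foldl App (psubst (sig us) t) vs)" using assms(3) SN_SNa by (simp add: msubsts_psubst)
  have "\<forall>u\<in>set us. SNa u" using assms(2) SN_SNa by blast
  with main[OF snP] have "SNa (foldl App (jumps t us) vs)" unfolding Qp_def by blast
  thus ?thesis by (rule SNa_SN)
qed

end
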